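(* Let $G$ be a connected bipartite graph with vertex set $\{u_1,\dots,u_n\}$ ($n\ge2$), let $H$ be a non-empty graph, and let $\mathcal{H}=\{H_1,\dots,H_n\}$ be a family of graphs such that $\mathcal{H}-\Phi=\{H\}$, i.e. exactly one graph of the family has an edge and it is $H$, all others being edgeless. Then $\dim_l(G\circ\mathcal{H})=\operatorname{adim}_l(H)+1$ if $H\in\mathcal{G}$, and $\dim_l(G\circ\mathcal{H})=\operatorname{adim}_l(H)$ otherwise.
   Context: All graphs are finite and simple with at least one vertex; a non-empty graph is one with at least one edge; $\Phi$ is the class of edgeless graphs. $d_G$ is shortest-path distance ($+\infty$ between components), $d_{G,2}=\min\{d_G,2\}$; $s$ distinguishes $x,y$ w.r.t. $d$ if $d(s,x)\ne d(s,y)$. $\dim_l(G)$: minimum size of $S\subseteq V(G)$ such that any two adjacent vertices are distinguished w.r.t. $d_G$ by some vertex of $S$. $\operatorname{adim}_l(H)$: minimum size of $S\subseteq V(H)$ such that any two adjacent vertices are distinguished w.r.t. $d_{H,2}$ by some vertex of $S$; minimum such sets are local adjacency bases. $\mathcal{G}$: class of graphs $H$ such that every local adjacency basis $B$ of $H$ satisfies $B\subseteq N_H(v)$ for some $v\in V(H)$. Lexicographic product $G\circ\mathcal{H}$: vertex set $\bigcup_i\{u_i\}\times V(H_i)$, $(u_i,v)\sim(u_j,w)$ iff $u_iu_j\in E(G)$, or $i=j$ and $vw\in E(H_i)$. *)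

theory Defs
  imports Main "HOL-Library.Extended_Nat"
begin

definition is_graph :: "'a set \<Rightarrow> ('a \<times> 'a) set \<Rightarrow> bool" where
  "is_graph V E \<longleftrightarrow> finite V \<and> V \<noteq> {} \<and> E \<subseteq> V \<times> V \<and> sym E \<and> irrefl E"

inductive walk :: "('a \<times> 'a) set \<Rightarrow> nat \<Rightarrow> 'a \<Rightarrow> 'a \<Rightarrow> bool" for E where
  walk_nil: "walk E 0 x x"
| walk_cons: "(x, y) \<in> E \<Longrightarrow> walk E n y z \<Longrightarrow> walk E (Suc n) x z"

definition gdist :: "('a \<times> 'a) set \<Rightarrow> 'a \<Rightarrow> 'a \<Rightarrow> enat" where
  "gdist E x y = (if \<exists>n. walk E n x y then enat (LEAST n. walk E n x y) else \<infinity>)"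

definition gdist2 :: "('a \<times> 'a) set \<Rightarrow> 'a \<Rightarrow> 'a \<Rightarrow> enat" where
  "gdist2 E x y = min (gdist E x y) 2"

definition connected_graph :: "'a set \<Rightarrow> ('a \<times> 'a) set \<Rightarrow> bool" where
  "connected_graph V E \<longleftrightarrow> (\<forall>x\<in>V. \<forall>y\<in>V. gdist E x y \<noteq> \<infinity>)"

definition bipartite :: "'a set \<Rightarrow> ('a \<times> 'a) set \<Rightarrow> bool" where
  "bipartite V E \<longleftrightarrow> (\<exists>A. \<forall>(x, y)\<in>E. (x \<in> A \<longleftrightarrow> y \<notin> A))"

definition local_resolving :: "'a set \<Rightarrow> ('a \<times> 'a) set \<Rightarrow> 'a set \<Rightarrow> bool" where
  "local_resolving V E S \<longleftrightarrow> S \<subseteq> V \<and>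
     (\<forall>x y. (x, y) \<in> E \<longrightarrow> (\<exists>s\<in>S. gdist E s x \<noteq> gdist E s y))"

definition dim_l :: "'a set \<Rightarrow> ('a \<times> 'a) set \<Rightarrow> nat" where
  "dim_l V E = (LEAST k. \<exists>S. local_resolving V E S \<and> card S = k)"

definition local_adj_resolving :: "'a set \<Rightarrow> ('a \<times> 'a) set \<Rightarrow> 'a set \<Rightarrow> bool" where
  "local_adj_resolving V E S \<longleftrightarrow> S \<subseteq> V \<and>
     (\<forall>x y. (x, y) \<in> E \<longrightarrow> (\<exists>s\<in>S. gdist2 E s x \<noteq> gdist2 E s y))"

definition adim_l :: "'a set \<Rightarrow> ('a \<times> 'a) set \<Rightarrow> nat" where
  "adim_l V E = (LEAST k. \<exists>S. local_adj_resolving V E S \<and> card S = k)"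

definition local_adj_basis :: "'a set \<Rightarrow> ('a \<times> 'a) set \<Rightarrow> 'a set \<Rightarrow> bool" where
  "local_adj_basis V E B \<longleftrightarrow> local_adj_resolving V E B \<and> card B = adim_l V E"

definition class_G :: "'a set \<Rightarrow> ('a \<times> 'a) set \<Rightarrow> bool" where
  "class_G V E \<longleftrightarrow> (\<forall>B. local_adj_basis V E B \<longrightarrow> (\<exists>v\<in>V. B \<subseteq> {w. (v, w) \<in> E}))"

definition lex_V :: "'a set \<Rightarrow> ('a \<Rightarrow> 'b set) \<Rightarrow> ('a \<times> 'b) set" where
  "lex_V V HV = Sigma V HV"

definition lex_E :: "'a set \<Rightarrow> ('a \<times> 'a) set \<Rightarrow> ('a \<Rightarrow> 'b set) \<Rightarrow> ('a \<Rightarrow> ('b \<times> 'b) set)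
    \<Rightarrow> (('a \<times> 'b) \<times> ('a \<times> 'b)) set" where
  "lex_E V E HV HE = {((u, v), (u', w)). (u, v) \<in> Sigma V HV \<and> (u', w) \<in> Sigma V HV \<and>
      ((u, u') \<in> E \<or> (u = u' \<and> (v, w) \<in> HE u))}"

end

theory Submission
  imports Defs
begin

lemma walk0: "walk R 0 x y \<Longrightarrow> x = y" by (erule walk.cases) auto
lemma walk_Suc: "walk R (Suc n) x y \<Longrightarrow> \<exists>z. (x,z)\<in>R \<and> walk R n z y"
  by (cases rule: walk.cases) auto
lemma walk1: "(x,y)\<in>R \<Longrightarrow> walk R 1 x y" using walk_cons[OF _ walk_nil] by simp

lemma gdist_le: "gdist R x y \<le> enat n \<longleftrightarrow> (\<exists>m\<le>n. walk R m x y)"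
proof (cases "\<exists>k. walk R k x y")
  case True
  then have w: "walk R (LEAST k. walk R k x y) x y" by (rule LeastI_ex)
  have "(enat (LEAST k. walk R k x y) \<le> enat n) \<longleftrightarrow> (\<exists>m\<le>n. walk R m x y)"
  proof
    assume "enat (LEAST k. walk R k x y) \<le> enat n" then show "\<exists>m\<le>n. walk R m x y" using w by auto
  next
    assume "\<exists>m\<le>n. walk R m x y" then obtain m where "m\<le>n" "walk R m x y" by blast
    then show "enat (LEAST k. walk R k x y) \<le> enat n" using Least_le[of "\<lambda>k. walk R k x y" m] by auto
  qed
  with True show ?thesis by (simp add: gdist_def)
next
  case False then show ?thesis by (auto simp: gdist_def)
qed

lemma gdist_walk: "gdist R x y = enat k \<Longrightarrow> walk R k x y"
  unfolding gdist_def by (metis LeastI_ex enat.inject infinity_ne_i0 enat_0 not_infinity_eq)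

lemma enat_eqI: assumes "\<And>n. (a \<le> enat n) = (b \<le> enat n)" shows "a = (b::enat)"
proof (cases a)
  case (enat k)
  then have "b \<le> enat k" using assms[of k] by simp
  then obtain l where l: "b = enat l" "l \<le> k" by (cases b) auto
  then have "a \<le> enat l" using assms[of l] by simp
  with enat l show ?thesis by simp
next
  case infinity
  show ?thesis proof (cases b)
    case (enat l) then have "a \<le> enat l" using assms[of l] by simp
    with infinity show ?thesis by simp
  qed (simp add: infinity)
qed

lemma gdist_0: "gdist R x x = 0"
proof -
  have "gdist R x x \<le> enat 0" unfolding gdist_le[of R x x 0] using walk_nil[of R x] le_refl by blast
  then have "gdist R x x \<le> 0" by (simp add: zero_enat_def)
  then show ?thesis by simp
qed

lemma gdist_not0: assumes "x \<noteq> y" shows "\<not> gdist R x y \<le> enat 0"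
proof
  assume "gdist R x y \<le> enat 0"
  then obtain m where "m \<le> 0" "walk R m x y" unfolding gdist_le[of R x y 0] by blast
  then have "walk R 0 x y" by simp
  then have "x = y" by (rule walk0)
  then show False using assms by simp
qed

lemma gdist_not1: "x \<noteq> y \<Longrightarrow> (x,y)\<notin>R \<Longrightarrow> \<not> gdist R x y \<le> enat 1"
proof
  assume a: "x \<noteq> y" "(x,y)\<notin>R" "gdist R x y \<le> enat 1"
  then obtain m where m: "m \<le> 1" "walk R m x y" unfolding gdist_le[of R x y 1] by blast
  show False
  proof (cases m)
    case 0 then have "walk R 0 x y" using m by simp
    then have "x = y" by (rule walk0)
    then show False using a by simp
  next
    case (Suc k) then have "k = 0" using m by simp
    then have "walk R (Suc 0) x y" using m Suc by simp
    then obtain z where z: "(x,z) \<in> R" "walk R 0 z y" using walk_Suc[of R 0 x y] by blast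
    then have "z = y" using walk0[of R z y] by simp
    then show False using a z by simp
  qed
qed

lemma gdist_1: "(x,y)\<in>R \<Longrightarrow> x \<noteq> y \<Longrightarrow> gdist R x y = 1"
proof -
  assume a: "(x,y)\<in>R" "x \<noteq> y"
  have "gdist R x y \<le> enat 1" unfolding gdist_le[of R x y 1] using walk1[OF a(1)] le_refl by blast
  moreover have "\<not> gdist R x y \<le> enat 0" by (rule gdist_not0[OF a(2)])
  ultimately show ?thesis by (cases "gdist R x y") (auto simp: one_enat_def)
qed

lemma gdist_2: "x \<noteq> y \<Longrightarrow> (x,y)\<notin>R \<Longrightarrow> (x,z)\<in>R \<Longrightarrow> (z,y)\<in>R \<Longrightarrow> gdist R x y = 2"
proof -
  assume a: "x \<noteq> y" "(x,y)\<notin>R" "(x,z)\<in>R" "(z,y)\<in>R"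
  have "walk R 2 x y" using walk_cons[OF a(3) walk1[OF a(4)]] by (simp add: numeral_2_eq_2)
  then have "gdist R x y \<le> enat 2" unfolding gdist_le[of R x y 2] using le_refl by blast
  moreover have "\<not> gdist R x y \<le> enat 1" by (rule gdist_not1[OF a(1) a(2)])
  ultimately show ?thesis by (cases "gdist R x y") (auto simp: numeral_eq_enat)
qed

definition val where "val R x y = (if x = y then (0::enat) else if (x,y)\<in>R then 1 else 2)"

lemma gdist2_val: "gdist2 R x y = val R x y"
proof (cases "x = y")
  case True
  then show ?thesis unfolding gdist2_def val_def using gdist_0[of R x] by simp
next
  case ne: False
  show ?thesis
  proof (cases "(x,y) \<in> R")
    case True
    then have "gdist R x y = 1" by (rule gdist_1[OF _ ne])
    then show ?thesis unfolding gdist2_def val_def using ne True by simp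
  next
    case False
    have "\<not> gdist R x y \<le> enat 1" by (rule gdist_not1[OF ne False])
    then have "min (gdist R x y) 2 = 2" by (cases "gdist R x y") (auto simp: numeral_eq_enat)
    then show ?thesis unfolding gdist2_def val_def using ne False by simp
  qed
qed

lemma walk_parity: assumes A: "\<forall>(x,y)\<in>R. (x\<in>A \<longleftrightarrow> y\<notin>A)" and w: "walk R n x y"
  shows "((x\<in>A) = (y\<in>A)) = even n"
  using w by (induction rule: walk.induct) (use A in auto)


lemma lr_edge: "local_resolving V' R S \<Longrightarrow> (p,q)\<in>R \<Longrightarrow> \<exists>s\<in>S. gdist R s p \<noteq> gdist R s q"
  unfolding local_resolving_def by (elim conjE allE impE) assumption+
lemma lar_edge: "local_adj_resolving V' R S \<Longrightarrow> (p,q)\<in>R \<Longrightarrow> \<exists>s\<in>S. gdist2 R s p \<noteq> gdist2 R s q"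
  unfolding local_adj_resolving_def by (elim conjE allE impE) assumption+
lemma lar_sub: "local_adj_resolving V' R S \<Longrightarrow> S \<subseteq> V'"
  unfolding local_adj_resolving_def by (elim conjE)

locale cor4 =
  fixes V :: "'a set" and E :: "('a \<times> 'a) set"
    and HV :: "'a \<Rightarrow> 'b set" and HE :: "'a \<Rightarrow> ('b \<times> 'b) set"
    and VH :: "'b set" and EH :: "('b \<times> 'b) set" and i c :: 'a and A :: "'a set"
  assumes finV: "finite V" and EV: "E \<subseteq> V \<times> V" and symE: "sym E" and irrE: "irrefl E"
  and Hfin: "\<And>u. u\<in>V \<Longrightarrow> finite (HV u)" and Hne: "\<And>u. u\<in>V \<Longrightarrow> HV u \<noteq> {}"
  and HEsub: "\<And>u. u\<in>V \<Longrightarrow> HE u \<subseteq> HV u \<times> HV u"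
  and conn: "connected_graph V E" and bip: "\<forall>(x,y)\<in>E. (x\<in>A \<longleftrightarrow> y\<notin>A)"
  and iV: "i\<in>V" and HVi: "HV i = VH" and HEi: "HE i = EH"
  and HEj: "\<And>j. j\<in>V \<Longrightarrow> j\<noteq>i \<Longrightarrow> HE j = {}"
  and ic: "(i,c)\<in>E" and symEH: "sym EH" and irrEH: "irrefl EH" and EHne: "EH \<noteq> {}"
begin

abbreviation "L \<equiv> lex_V V HV"
abbreviation "P \<equiv> lex_E V E HV HE"

lemma cV: "c \<in> V" using ic EV by auto
lemma ci: "c \<noteq> i" using ic irrE by (auto simp: irrefl_def)
lemma HEc: "HE c = {}" using HEj cV ci by blast
lemma ci_E: "(c,i) \<in> E" using ic symE by (auto simp: sym_def)
lemma EHsub: "EH \<subseteq> VH \<times> VH" using HEsub[OF iV] HVi HEi by simp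

lemma P_iff: "((u,v),(u',w))\<in>P \<longleftrightarrow> u\<in>V \<and> v\<in>HV u \<and> u'\<in>V \<and> w\<in>HV u' \<and> ((u,u')\<in>E \<or> u=u' \<and> (v,w)\<in>HE u)"
  by (auto simp: lex_E_def)

lemma proj: "walk P n p q \<Longrightarrow> \<exists>m\<le>n. walk E m (fst p) (fst q)"
proof (induction rule: walk.induct)
  case (walk_nil x)
  have "walk E 0 (fst x) (fst x)" by (rule walk.walk_nil)
  then show ?case by blast
next
  case (walk_cons x y n z)
  then obtain m where m: "m \<le> n" "walk E m (fst y) (fst z)" by blast
  obtain u v u' w where xy: "x = (u,v)" "y = (u',w)" by (cases x, cases y) auto
  with walk_cons(1) have "(u,u')\<in>E \<or> u = u'" by (auto simp: P_iff)
  then show ?case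
  proof
    assume "(u,u')\<in>E" then have "walk E (Suc m) (fst x) (fst z)" using m xy walk.walk_cons by auto
    moreover have "Suc m \<le> Suc n" using m by simp
    ultimately show ?thesis by blast
  next
    assume "u = u'" then have "walk E m (fst x) (fst z)" using m xy by simp
    moreover have "m \<le> Suc n" using m by simp
    ultimately show ?thesis by blast
  qed
qed

lemma lift: "walk E m a b \<Longrightarrow> 0<m \<Longrightarrow> x\<in>HV a \<Longrightarrow> y\<in>HV b \<Longrightarrow> walk P m (a,x) (b,y)"
proof (induction arbitrary: x rule: walk.induct)
  case (walk_nil x)
  then show ?case by simp
next
  case (walk_cons a c' n b)
  have aV: "a \<in> V" "c' \<in> V" using walk_cons(1) EV by auto
  show ?case
  proof (cases n)
    case 0
    then have "walk E 0 c' b" using walk_cons(2) by simp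
    then have "c' = b" by (rule walk0)
    then have e: "((a,x),(b,y)) \<in> P" using aV walk_cons by (auto simp: P_iff)
    have "walk P (Suc 0) (a,x) (b,y)" by (rule walk.walk_cons[OF e walk.walk_nil])
    then show ?thesis using 0 by simp
  next
    case (Suc k)
    obtain z where z: "z \<in> HV c'" using Hne[OF aV(2)] by blast
    have w: "walk P n (c',z) (b,y)" by (rule walk_cons.IH) (use Suc z walk_cons.prems in auto)
    have e: "((a,x),(c',z)) \<in> P" using aV walk_cons z by (auto simp: P_iff)
    show ?thesis by (rule walk.walk_cons[OF e w])
  qed
qed

lemma cross: assumes "a\<noteq>b" "x\<in>HV a" "y\<in>HV b" shows "gdist P (a,x) (b,y) = gdist E a b"
proof (rule enat_eqI)
  fix n
  show "(gdist P (a,x) (b,y) \<le> enat n) = (gdist E a b \<le> enat n)"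
    unfolding gdist_le
  proof
    assume "\<exists>m\<le>n. walk P m (a, x) (b, y)"
    then obtain m where m: "m \<le> n" "walk P m (a, x) (b, y)" by blast
    obtain m' where m': "m' \<le> m" "walk E m' (fst (a,x)) (fst (b,y))" using proj[OF m(2)] by blast
    have "m' \<le> n" using m m' by simp
    moreover have "walk E m' a b" using m' by simp
    ultimately show "\<exists>m\<le>n. walk E m a b" by blast
  next
    assume "\<exists>m\<le>n. walk E m a b"
    then obtain m where m: "m \<le> n" "walk E m a b" by blast
    have "m \<noteq> 0"
    proof
      assume "m = 0" then have "walk E 0 a b" using m by simp
      then have "a = b" by (rule walk0)
      then show False using assms by simp
    qed
    then have "walk P m (a,x) (b,y)" using lift[OF m(2)] assms by simp
    then show "\<exists>m\<le>n. walk P m (a, x) (b, y)" using m by blast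
  qed
qed

lemma parity: assumes "a\<in>V" "(u,u')\<in>E" shows "gdist E a u \<noteq> gdist E a u'"
proof
  assume eq: "gdist E a u = gdist E a u'"
  have uV: "u \<in> V" using assms EV by auto
  have "gdist E a u \<noteq> \<infinity>" using conn assms uV by (auto simp: connected_graph_def)
  then obtain k where k: "gdist E a u = enat k" by auto
  have w1: "walk E k a u" "walk E k a u'" using gdist_walk[OF k] gdist_walk[of E a u' k] k eq by simp_all
  have "((a\<in>A) = (u\<in>A)) = even k" "((a\<in>A) = (u'\<in>A)) = even k"
    using walk_parity[OF bip w1(1)] walk_parity[OF bip w1(2)] by auto
  moreover have "(u\<in>A) = (u'\<notin>A)" using bip assms(2) by auto
  ultimately show False by auto
qed

lemma fiber_i: assumes "b\<in>VH" "v\<in>VH" shows "gdist P (i,b) (i,v) = gdist2 EH b v"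
proof -
  have iff: "((i,b),(i,v)) \<in> P \<longleftrightarrow> (b,v) \<in> EH" using assms iV HVi HEi irrE by (auto simp: P_iff irrefl_def)
  obtain z where z: "z \<in> HV c" using Hne cV by blast
  have p1: "((i,b),(c,z)) \<in> P" "((c,z),(i,v)) \<in> P" using assms iV HVi z ic ci_E cV by (auto simp: P_iff)
  show ?thesis
  proof (cases "b = v")
    case True then show ?thesis unfolding gdist2_val val_def using gdist_0[of P "(i,b)"] by simp
  next
    case ne: False
    show ?thesis
    proof (cases "(b,v) \<in> EH")
      case True
      then have "((i,b),(i,v)) \<in> P" using iff by simp
      then have "gdist P (i,b) (i,v) = 1" by (rule gdist_1) (use ne in simp)
      then show ?thesis unfolding gdist2_val val_def using ne True by simp
    next
      case False
      then have "((i,b),(i,v)) \<notin> P" using iff by simp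
      moreover have "(i,b) \<noteq> (i,v)" using ne by simp
      ultimately have "gdist P (i,b) (i,v) = 2" using gdist_2[OF _ _ p1] by blast
      then show ?thesis unfolding gdist2_val val_def using ne False by simp
    qed
  qed
qed

lemma fiber_c: assumes "z\<in>HV c" "w\<in>HV c" shows "gdist P (c,z) (c,w) \<noteq> 1"
proof (cases "z = w")
  case True then show ?thesis using gdist_0[of P "(c,z)"] by simp
next
  case False
  have nP: "((c,z),(c,w)) \<notin> P" using HEc irrE by (auto simp: P_iff irrefl_def)
  have "\<not> gdist P (c,z) (c,w) \<le> enat 1" using gdist_not1[OF _ nP] False by simp
  then show ?thesis by (metis one_enat_def order_refl)
qed

lemma dist_ic: "gdist E i c = 1" "gdist E c i = 1"
  using ci gdist_1[OF ic] gdist_1[OF ci_E] by auto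

lemma Lfin: "finite L" unfolding lex_V_def using finV Hfin by auto


lemma VHfin: "finite VH" using Hfin iV HVi by auto

lemma claim1: assumes "local_resolving L P S"
  shows "local_adj_resolving VH EH {b. (i,b)\<in>S}" "card {b. (i,b)\<in>S} \<le> card S"
proof -
  have SL: "S \<subseteq> L" using assms by (simp add: local_resolving_def)
  show "local_adj_resolving VH EH {b. (i,b)\<in>S}"
    unfolding local_adj_resolving_def
  proof (intro conjI allI impI)
    show "{b. (i, b) \<in> S} \<subseteq> VH" using SL HVi by (auto simp: lex_V_def)
  next
    fix x y assume xy: "(x,y) \<in> EH"
    then have xyV: "x \<in> VH" "y \<in> VH" using EHsub by auto
    have "((i,x),(i,y)) \<in> P" using xy xyV iV HVi HEi by (auto simp: P_iff)
    then obtain s where s: "s \<in> S" "gdist P s (i,x) \<noteq> gdist P s (i,y)"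
      using lr_edge[OF assms] by blast
    obtain a b where ab: "s = (a,b)" by (cases s)
    have sL: "a \<in> V" "b \<in> HV a" using s SL ab by (auto simp: lex_V_def)
    have "a = i"
    proof (rule ccontr)
      assume "a \<noteq> i"
      then show False using s ab cross[of a i b x] cross[of a i b y] sL xyV HVi by auto
    qed
    then show "\<exists>s\<in>{b. (i, b) \<in> S}. gdist2 EH s x \<noteq> gdist2 EH s y"
      using s ab fiber_i sL xyV HVi by auto
  qed
  have "finite S" using SL Lfin finite_subset by blast
  moreover have "(\<lambda>b. (i,b)) ` {b. (i,b)\<in>S} \<subseteq> S" by auto
  ultimately have "card ((\<lambda>b. (i,b)) ` {b. (i,b)\<in>S}) \<le> card S" by (rule card_mono)
  moreover have "card ((\<lambda>b. (i,b)) ` {b. (i,b)\<in>S}) = card {b. (i,b)\<in>S}"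
    by (rule card_image) (auto simp: inj_on_def)
  ultimately show "card {b. (i,b)\<in>S} \<le> card S" by simp
qed

lemma adim_le: "local_adj_resolving VH EH B \<Longrightarrow> adim_l VH EH \<le> card B"
  unfolding adim_l_def by (rule Least_le) blast

lemma lower: "local_resolving L P S \<Longrightarrow> adim_l VH EH \<le> card S"
  using claim1 adim_le le_trans by blast

lemma common:
  assumes B: "local_adj_resolving VH EH B" and SB: "(\<lambda>b. (i,b)) ` B \<subseteq> S" and SL: "S \<subseteq> L"
    and sp: "\<And>v u' w. v\<in>VH \<Longrightarrow> (i,u')\<in>E \<Longrightarrow> w\<in>HV u' \<Longrightarrow> \<exists>s\<in>S. gdist P s (i,v) \<noteq> gdist P s (u',w)"
  shows "local_resolving L P S"
  unfolding local_resolving_def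
proof (intro conjI allI impI SL)
  fix p q assume pq: "(p,q) \<in> P"
  obtain u v u' w where uv: "p = (u,v)" "q = (u',w)" by (cases p, cases q) auto
  have pqL: "u\<in>V" "v\<in>HV u" "u'\<in>V" "w\<in>HV u'" using pq uv by (auto simp: P_iff)
  have BVH: "B \<subseteq> VH" using B by (simp add: local_adj_resolving_def)
  have Bne: "B \<noteq> {}"
  proof -
    obtain x y where "(x,y)\<in>EH" using EHne by auto
    then show ?thesis using lar_edge[OF B] by blast
  qed
  consider "(u,u')\<in>E" | "u = u'" "(v,w) \<in> HE u" using pq uv by (auto simp: P_iff)
  then show "\<exists>s\<in>S. gdist P s p \<noteq> gdist P s q"
  proof cases
    case 2
    then have "u = i" using HEj pqL by fastforce
    then have vw: "(v,w) \<in> EH" "v\<in>VH" "w\<in>VH" using 2 HEi EHsub by auto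
    then obtain b where b: "b \<in> B" "gdist2 EH b v \<noteq> gdist2 EH b w"
      using lar_edge[OF B] by blast
    then have "gdist P (i,b) p \<noteq> gdist P (i,b) q" using fiber_i vw BVH uv 2 \<open>u = i\<close> by auto
    then show ?thesis using SB b by blast
  next
    case 1
    then have uu: "u \<noteq> u'" using irrE by (auto simp: irrefl_def)
    show ?thesis
    proof (cases "u = i")
      case True then show ?thesis using sp[of v u' w] pqL 1 uv HVi by auto
    next
      case ui: False
      show ?thesis
      proof (cases "u' = i")
        case True
        have "(i,u)\<in>E" using 1 True symE by (auto simp: sym_def)
        then obtain s where "s\<in>S" "gdist P s (i,w) \<noteq> gdist P s (u,v)"
          using sp[of w u v] pqL True HVi by auto
        then show ?thesis using True uv by metis
      next
        case ui': False
        obtain b where b: "b \<in> B" using Bne by auto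
        have bH: "b \<in> HV i" using b BVH HVi by auto
        have "gdist P (i,b) p \<noteq> gdist P (i,b) q"
          using cross[of i u b v] cross[of i u' b w] ui ui' bH pqL uv parity[OF iV 1] by auto
        then show ?thesis using SB b by blast
      qed
    qed
  qed
qed

lemma SL_img: "local_adj_resolving VH EH B \<Longrightarrow> (\<lambda>b. (i,b)) ` B \<subseteq> L"
  using iV HVi by (auto simp: local_adj_resolving_def lex_V_def)

lemma claim2: assumes B: "local_adj_resolving VH EH B" and nb: "\<not>(\<exists>v\<in>VH. B \<subseteq> {w. (v,w)\<in>EH})"
  shows "local_resolving L P ((\<lambda>b. (i,b)) ` B)"
proof (rule common[OF B subset_refl SL_img[OF B]])
  fix v u' w assume a: "v\<in>VH" "(i,u')\<in>E" "w\<in>HV u'"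
  obtain b where b: "b \<in> B" "(v,b) \<notin> EH" using nb a by auto
  have bv: "(b,v) \<notin> EH" using b symEH by (auto simp: sym_def)
  have bH: "b \<in> VH" using lar_sub[OF B] b by blast
  have iu: "i \<noteq> u'" using a irrE by (auto simp: irrefl_def)
  have "gdist P (i,b) (u',w) = 1" using cross[of i u' b w] iu bH HVi a gdist_1[of i u' E] by auto
  moreover have "gdist P (i,b) (i,v) \<noteq> 1" using fiber_i[OF bH a(1)] bv
    unfolding gdist2_val val_def by auto
  ultimately have d: "gdist P (i,b) (i,v) \<noteq> gdist P (i,b) (u',w)" by simp
  have m: "(i,b) \<in> (\<lambda>b. (i,b)) ` B" using b(1) by (rule imageI)
  show "\<exists>s\<in>(\<lambda>b. (i,b)) ` B. gdist P s (i,v) \<noteq> gdist P s (u',w)" by (rule bexI[OF _ m]) (rule d)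
qed

lemma claim3: assumes B: "local_adj_resolving VH EH B" and z: "z \<in> HV c"
  shows "local_resolving L P (insert (c,z) ((\<lambda>b. (i,b)) ` B))"
proof (rule common[OF B])
  show "insert (c, z) ((\<lambda>b. (i, b)) ` B) \<subseteq> L" using SL_img[OF B] z cV by (auto simp: lex_V_def)
next
  fix v u' w assume a: "v\<in>VH" "(i,u')\<in>E" "w\<in>HV u'"
  have vH: "v \<in> HV i" using a HVi by simp
  have "gdist P (c,z) (i,v) \<noteq> gdist P (c,z) (u',w)"
  proof (cases "u' = c")
    case True
    then show ?thesis using cross[of c i z v] ci z vH dist_ic fiber_c[OF z] a by auto
  next
    case False
    have iu: "i \<noteq> u'" using a irrE by (auto simp: irrefl_def)
    then show ?thesis using cross[of c i z v] cross[of c u' z w] ci z vH False a parity[OF cV a(2)] by auto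
  qed
  then show "\<exists>s\<in>insert (c,z) ((\<lambda>b. (i,b)) ` B). gdist P s (i,v) \<noteq> gdist P s (u',w)" by blast
qed auto

lemma claim4: assumes G: "class_G VH EH" and S: "local_resolving L P S"
  shows "adim_l VH EH + 1 \<le> card S"
proof (rule ccontr)
  assume "\<not> ?thesis"
  then have le: "card S \<le> adim_l VH EH" by simp
  define B where "B = {b. (i,b)\<in>S}"
  have B: "local_adj_resolving VH EH B" "card B \<le> card S" using claim1[OF S] B_def by auto
  have cB: "card B = adim_l VH EH" using adim_le[OF B(1)] B(2) le by simp
  have SL: "S \<subseteq> L" using S by (simp add: local_resolving_def)
  have finS: "finite S" using SL Lfin finite_subset by blast
  have imgS: "(\<lambda>b. (i,b)) ` B \<subseteq> S" using B_def by auto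
  have cimg: "card ((\<lambda>b. (i,b)) ` B) = card B" by (rule card_image) (auto simp: inj_on_def)
  have SeqB: "S = (\<lambda>b. (i,b)) ` B"
    using card_subset_eq[OF finS imgS] cimg cB B(2) le by simp
  have "local_adj_basis VH EH B" using B(1) cB by (simp add: local_adj_basis_def)
  then obtain v where v: "v\<in>VH" "B \<subseteq> {w. (v,w)\<in>EH}" using G by (auto simp: class_G_def)
  obtain z where z: "z \<in> HV c" using Hne cV by blast
  have "((i,v),(c,z)) \<in> P" using v iV HVi cV z ic by (auto simp: P_iff)
  then obtain s where s: "s \<in> S" "gdist P s (i,v) \<noteq> gdist P s (c,z)"
    using lr_edge[OF S] by blast
  then obtain b where b: "s = (i,b)" "b \<in> B" using SeqB by auto
  have vb: "(v,b) \<in> EH" using b v by auto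
  have bv: "(b,v) \<in> EH" "b \<noteq> v" "b \<in> VH" using vb symEH irrEH EHsub by (auto simp: sym_def irrefl_def)
  have "gdist P s (i,v) = 1" using b fiber_i[of b v] bv v unfolding gdist2_val val_def by auto
  moreover have "gdist P s (c,z) = 1" using b cross[of i c b z] ci bv HVi z dist_ic by auto
  ultimately show False using s by simp
qed

lemma adim_ex: "\<exists>B. local_adj_resolving VH EH B \<and> card B = adim_l VH EH"
proof -
  have "local_adj_resolving VH EH VH"
    unfolding local_adj_resolving_def
  proof (intro conjI allI impI subset_refl)
    fix x y assume xy: "(x,y) \<in> EH"
    then have "x \<in> VH" "x \<noteq> y" using EHsub irrEH by (auto simp: irrefl_def)
    then show "\<exists>s\<in>VH. gdist2 EH s x \<noteq> gdist2 EH s y" unfolding gdist2_val val_def by auto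
  qed
  then have "\<exists>k. \<exists>S. local_adj_resolving VH EH S \<and> card S = k" by blast
  then have "\<exists>S. local_adj_resolving VH EH S \<and> card S = (LEAST k. \<exists>S. local_adj_resolving VH EH S \<and> card S = k)"
    by (rule LeastI_ex)
  then show ?thesis unfolding adim_l_def .
qed

theorem main: "dim_l L P = (if class_G VH EH then adim_l VH EH + 1 else adim_l VH EH)"
proof (cases "class_G VH EH")
  case True
  obtain B where B: "local_adj_resolving VH EH B" "card B = adim_l VH EH" using adim_ex by blast
  obtain z where z: "z \<in> HV c" using Hne cV by blast
  let ?S = "insert (c,z) ((\<lambda>b. (i,b)) ` B)"
  have finB: "finite B" using B(1) VHfin finite_subset by (auto simp: local_adj_resolving_def)
  have "card ?S = card B + 1"
    using finB ci by (subst card_insert_disjoint) (auto simp: card_image inj_on_def)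
  then have "\<exists>S. local_resolving L P S \<and> card S = adim_l VH EH + 1" using claim3[OF B(1) z] B by metis
  then have "dim_l L P = adim_l VH EH + 1" unfolding dim_l_def
    by (rule Least_equality[OF _ ]) (use claim4[OF True] in blast)
  then show ?thesis using True by simp
next
  case False
  then obtain B where B: "local_adj_basis VH EH B" "\<not>(\<exists>v\<in>VH. B \<subseteq> {w. (v,w)\<in>EH})"
    by (auto simp: class_G_def)
  have "card ((\<lambda>b. (i,b)) ` B) = card B" by (rule card_image) (auto simp: inj_on_def)
  then have "\<exists>S. local_resolving L P S \<and> card S = adim_l VH EH"
    using claim2 B by (metis local_adj_basis_def)
  then have "dim_l L P = adim_l VH EH" unfolding dim_l_def
    by (rule Least_equality[OF _ ]) (use lower in blast)
  then show ?thesis using False by simp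
qed

end

theorem corollary4:
  fixes V :: "'a set" and E :: "('a \<times> 'a) set"
    and HV :: "'a \<Rightarrow> 'b set" and HE :: "'a \<Rightarrow> ('b \<times> 'b) set"
    and VH :: "'b set" and EH :: "('b \<times> 'b) set"
  assumes "is_graph V E" and "connected_graph V E" and "bipartite V E" and "card V \<ge> 2"
    and "\<forall>u\<in>V. is_graph (HV u) (HE u)"
    and "is_graph VH EH" and "EH \<noteq> {}"
    and "\<exists>i\<in>V. HV i = VH \<and> HE i = EH \<and> (\<forall>j\<in>V. j \<noteq> i \<longrightarrow> HE j = {})"
  shows "dim_l (lex_V V HV) (lex_E V E HV HE) =
           (if class_G VH EH then adim_l VH EH + 1 else adim_l VH EH)"
proof -
  obtain i where i: "i\<in>V" "HV i = VH" "HE i = EH" "\<forall>j\<in>V. j \<noteq> i \<longrightarrow> HE j = {}"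
    using assms(8) by blast
  obtain A where A: "\<forall>(x,y)\<in>E. (x\<in>A \<longleftrightarrow> y\<notin>A)" using assms(3) by (auto simp: bipartite_def)
  have G: "finite V" "E \<subseteq> V \<times> V" "sym E" "irrefl E" using assms(1) by (auto simp: is_graph_def)
  obtain c' where c': "c' \<in> V" "c' \<noteq> i"
  proof -
    have "\<not> V \<subseteq> {i}" using assms(4) card_mono[of "{i}" V] by fastforce
    then show ?thesis using that by blast
  qed
  have "gdist E i c' \<noteq> \<infinity>" using assms(2) i c' by (auto simp: connected_graph_def)
  then obtain n where wn: "walk E n i c'" by (auto simp: gdist_def split: if_splits)
  have "n \<noteq> 0"
  proof
    assume "n = 0" then have "walk E 0 i c'" using wn by simp
    then have "i = c'" by (rule walk0)
    then show False using c' by simp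
  qed
  then obtain k where "n = Suc k" by (cases n) auto
  then have wk: "walk E (Suc k) i c'" using wn by simp
  obtain c where ic: "(i,c) \<in> E" using walk_Suc[OF wk] by blast
  have H: "sym EH" "irrefl EH" using assms(6) unfolding is_graph_def by simp_all
  have Hu: "\<And>u. u\<in>V \<Longrightarrow> finite (HV u) \<and> HV u \<noteq> {} \<and> HE u \<subseteq> HV u \<times> HV u"
    using assms(5) unfolding is_graph_def by simp
  have loc: "cor4 V E HV HE VH EH i c A"
  proof (unfold_locales)
    show "finite V" "E \<subseteq> V \<times> V" "sym E" "irrefl E" using G by simp_all
    show "\<And>u. u\<in>V \<Longrightarrow> finite (HV u)" using Hu by blast
    show "\<And>u. u\<in>V \<Longrightarrow> HV u \<noteq> {}" using Hu by blast
    show "\<And>u. u\<in>V \<Longrightarrow> HE u \<subseteq> HV u \<times> HV u" using Hu by blast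
    show "connected_graph V E" by (rule assms(2))
    show "\<forall>(x,y)\<in>E. (x\<in>A \<longleftrightarrow> y\<notin>A)" by (rule A)
    show "i \<in> V" "HV i = VH" "HE i = EH" using i by simp_all
    show "\<And>j. j\<in>V \<Longrightarrow> j\<noteq>i \<Longrightarrow> HE j = {}" using i(4) by blast
    show "(i,c) \<in> E" by (rule ic)
    show "sym EH" "irrefl EH" by (rule H(1), rule H(2))
    show "EH \<noteq> {}" by (rule assms(7))
  qed
  interpret cor4 V E HV HE VH EH i c A by (rule loc)
  show ?thesis by (rule main)
qed

end
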